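(* Let $\Delta \subseteq N_\mathbb{R}$ be a reflexive polytope (of any dimension $d$) and let $\Sigma$ be a $\Delta$-maximal fan. Then: (1) every cone of $\Sigma$ of dimension at most $3$ is unimodular; in particular the toric variety $X(\Sigma)$ has singular locus of codimension $\geq 4$; (2) every $4$-dimensional cone of $\Sigma$ that is not contained in a maximal cone of $\Sigma(\Delta)$ is unimodular; in particular the toric variety $X(\Sigma^{[4]})$ is Gorenstein.
   Context: $N \cong \mathbb{Z}^d$ is a lattice, $M = \mathrm{Hom}(N,\mathbb{Z})$ its dual, $N_\mathbb{R} = N\otimes\mathbb{R}$, $M_\mathbb{R}=M\otimes \mathbb{R}$, and $\langle\,,\rangle$ the natural pairing. A lattice polytope $\Delta\subseteq N_\mathbb{R}$ with the origin in its interior is reflexive if $\Delta^* = \{m\in M_\mathbb{R} : \langle m,n\rangle \ge -1 \text{ for all } n\in\Delta\}$ is a lattice polytope. $\Sigma(\Delta)$ denotes the fan of cones over the proper faces of $\Delta$. A fan $\Sigma$ in $N_\mathbb{R}$ is $\Delta$-maximal if (1) its set of rays equals the set of rays through the nonzero lattice points of $\Delta$, and (2) $\Sigma$ is complete and simplicial (it need not subdivide $\Sigma(\Delta)$ nor be projective). A cone is unimodular if it is spanned by part of a lattice basis of $N$. $X(\Sigma)$ denotes the toric variety of a fan $\Sigma$, and $\Sigma^{[n]}$ the subfan of cones of dimension at most $n$. *)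

theory Defs
  imports "HOL-Analysis.Analysis"
begin

text \<open>The lattice N is the integer points of real^'n; M is identified with N via the
  standard inner product.\<close>

definition lattice_pt :: "real^'n \<Rightarrow> bool" where
  "lattice_pt x \<longleftrightarrow> (\<forall>i. x $ i \<in> \<int>)"

definition lattice_polytope :: "(real^'n) set \<Rightarrow> bool" where
  "lattice_polytope P \<longleftrightarrow>
     (\<exists>S. finite S \<and> (\<forall>x\<in>S. lattice_pt x) \<and> P = convex hull S)"

definition dual_polytope :: "(real^'n) set \<Rightarrow> (real^'n) set" where
  "dual_polytope P = {m. \<forall>n\<in>P. m \<bullet> n \<ge> -1}"

definition reflexive_polytope :: "(real^'n) set \<Rightarrow> bool" where
  "reflexive_polytope P \<longleftrightarrow>
     lattice_polytope P \<and> 0 \<in> interior P \<and> lattice_polytope (dual_polytope P)"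

definition cone_gen :: "(real^'n) set \<Rightarrow> (real^'n) set" where
  "cone_gen S = {y. \<exists>c. (\<forall>v\<in>S. c v \<ge> 0) \<and> y = (\<Sum>v\<in>S. c v *\<^sub>R v)}"

definition polyhedral_cone :: "(real^'n) set \<Rightarrow> bool" where
  "polyhedral_cone \<sigma> \<longleftrightarrow> (\<exists>S. finite S \<and> \<sigma> = cone_gen S)"

definition is_fan :: "(real^'n) set set \<Rightarrow> bool" where
  "is_fan \<Sigma> \<longleftrightarrow> finite \<Sigma> \<and>
     (\<forall>\<sigma>\<in>\<Sigma>. polyhedral_cone \<sigma> \<and> \<sigma> \<inter> uminus ` \<sigma> = {0}) \<and>
     (\<forall>\<sigma>\<in>\<Sigma>. \<forall>\<tau>. \<tau> face_of \<sigma> \<and> \<tau> \<noteq> {} \<longrightarrow> \<tau> \<in> \<Sigma>) \<and>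
     (\<forall>\<sigma>\<in>\<Sigma>. \<forall>\<tau>\<in>\<Sigma>. (\<sigma> \<inter> \<tau>) face_of \<sigma> \<and> (\<sigma> \<inter> \<tau>) face_of \<tau>)"

definition complete_fan :: "(real^'n) set set \<Rightarrow> bool" where
  "complete_fan \<Sigma> \<longleftrightarrow> \<Union>\<Sigma> = UNIV"

definition simplicial_fan :: "(real^'n) set set \<Rightarrow> bool" where
  "simplicial_fan \<Sigma> \<longleftrightarrow>
     (\<forall>\<sigma>\<in>\<Sigma>. \<exists>S. finite S \<and> independent S \<and> \<sigma> = cone_gen S)"

definition fan_rays :: "(real^'n) set set \<Rightarrow> (real^'n) set set" where
  "fan_rays \<Sigma> = {\<rho>\<in>\<Sigma>. dim \<rho> = 1}"

definition Delta_maximal :: "(real^'n) set \<Rightarrow> (real^'n) set set \<Rightarrow> bool" where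
  "Delta_maximal \<Delta> \<Sigma> \<longleftrightarrow> is_fan \<Sigma> \<and>
     fan_rays \<Sigma> = {cone_gen {p} | p. p \<in> \<Delta> \<and> lattice_pt p \<and> p \<noteq> 0} \<and>
     complete_fan \<Sigma> \<and> simplicial_fan \<Sigma>"

definition int_span :: "(real^'n) set \<Rightarrow> (real^'n) set" where
  "int_span E = {y. \<exists>c. (\<forall>v\<in>E. c v \<in> \<int>) \<and> y = (\<Sum>v\<in>E. c v *\<^sub>R v)}"

definition lattice_basis :: "(real^'n) set \<Rightarrow> bool" where
  "lattice_basis E \<longleftrightarrow> finite E \<and> independent E \<and> int_span E = {x. lattice_pt x}"

definition unimodular_cone :: "(real^'n) set \<Rightarrow> bool" where
  "unimodular_cone \<sigma> \<longleftrightarrow> (\<exists>B E. lattice_basis E \<and> B \<subseteq> E \<and> \<sigma> = cone_gen B)"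

definition cone_over :: "(real^'n) set \<Rightarrow> (real^'n) set" where
  "cone_over F = {t *\<^sub>R x | t x. 0 \<le> t \<and> x \<in> F}"

definition maximal_cones_of_face_fan :: "(real^'n) set \<Rightarrow> (real^'n) set set" where
  "maximal_cones_of_face_fan \<Delta> = {cone_over F | F. F facet_of \<Delta>}"

end

theory Submission
  imports Defs
begin


lemma lat_zero[simp]: "lattice_pt 0" by (simp add: lattice_pt_def)
lemma lat_add: "lattice_pt x \<Longrightarrow> lattice_pt y \<Longrightarrow> lattice_pt (x+y)"
  by (simp add: lattice_pt_def)
lemma lat_diff: "lattice_pt x \<Longrightarrow> lattice_pt y \<Longrightarrow> lattice_pt (x-y)"
  by (simp add: lattice_pt_def)
lemma lat_scale: "c \<in> \<int> \<Longrightarrow> lattice_pt x \<Longrightarrow> lattice_pt (c *\<^sub>R x)"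
  by (simp add: lattice_pt_def)
lemma lat_sum: "(\<And>v. v\<in>S \<Longrightarrow> c v \<in> \<int> \<and> lattice_pt v) \<Longrightarrow> lattice_pt (\<Sum>v\<in>S. c v *\<^sub>R v)"
proof (induction S rule: infinite_finite_induct)
  case (insert x F) then show ?case by (simp add: lat_add lat_scale)
qed auto
lemma lat_axis: "lattice_pt (axis i (1::real))"
  by (simp add: lattice_pt_def axis_def)
lemma lat_inner: "lattice_pt m \<Longrightarrow> lattice_pt y \<Longrightarrow> m \<bullet> y \<in> \<int>"
  unfolding inner_vec_def lattice_pt_def by (auto intro!: Ints_sum Ints_mult)

lemma lat_finite: "finite {x::real^'n. lattice_pt x \<and> norm x \<le> R}"
proof -
  define A where "A = real_of_int ` {-\<lceil>R\<rceil>..\<lceil>R\<rceil>}"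
  have fA: "finite A" unfolding A_def by simp
  have "{x::real^'n. lattice_pt x \<and> norm x \<le> R} \<subseteq> (\<lambda>f. \<chi> i. f i) ` (Pi\<^sub>E UNIV (\<lambda>_. A))"
  proof
    fix x :: "real^'n" assume x: "x \<in> {x. lattice_pt x \<and> norm x \<le> R}"
    have "x $ i \<in> A" for i
    proof -
      obtain k where k: "x $ i = of_int k" using x unfolding lattice_pt_def by (auto elim!: Ints_cases)
      have "\<bar>x$i\<bar> \<le> R" using component_le_norm_cart[of x i] x by auto
      hence "\<bar>k\<bar> \<le> \<lceil>R\<rceil>" using k by (metis ceiling_mono ceiling_of_int of_int_abs)
      hence "k \<in> {-\<lceil>R\<rceil>..\<lceil>R\<rceil>}" by auto
      thus ?thesis unfolding A_def using k by auto
    qed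
    hence "(\<lambda>i. x$i) \<in> Pi\<^sub>E UNIV (\<lambda>_. A)" by (simp add: PiE_UNIV_domain)
    moreover have "x = (\<chi> i. (\<lambda>i. x$i) i)" by simp
    ultimately show "x \<in> (\<lambda>f. \<chi> i. f i) ` (Pi\<^sub>E UNIV (\<lambda>_. A))" by blast
  qed
  moreover have "finite (Pi\<^sub>E (UNIV::'n set) (\<lambda>_. A))" by (rule finite_PiE) (auto simp: fA)
  ultimately show ?thesis by (meson finite_imageI finite_subset)
qed

lemma int_span_lat: "(\<And>w. w\<in>W \<Longrightarrow> lattice_pt w) \<Longrightarrow> x \<in> int_span W \<Longrightarrow> lattice_pt x"
  unfolding int_span_def by (auto intro!: lat_sum)




lemma indep_coeff_zero:
  fixes S :: "'a::real_vector set"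
  assumes "finite S" "independent S" "(\<Sum>v\<in>S. c v *\<^sub>R v) = 0" "v \<in> S"
  shows "c v = 0"
  using assms dependent_finite[of S] by auto

lemma int_span_insert:
  assumes "finite W" "a \<notin> W" "z \<in> int_span W" "n \<in> \<int>"
  shows "z + n *\<^sub>R a \<in> int_span (insert a W)"
proof -
  obtain c where c: "\<forall>v\<in>W. c v \<in> \<int>" "z = (\<Sum>v\<in>W. c v *\<^sub>R v)"
    using assms(3) unfolding int_span_def by auto
  define c' where "c' = c(a := n)"
  have "(\<Sum>v\<in>insert a W. c' v *\<^sub>R v) = n *\<^sub>R a + (\<Sum>v\<in>W. c v *\<^sub>R v)"
    using assms(1,2) by (simp add: c'_def sum.insert) (intro sum.cong; auto)
  moreover have "\<forall>v\<in>insert a W. c' v \<in> \<int>" using c assms(4) by (auto simp: c'_def)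
  ultimately show ?thesis unfolding int_span_def using c by (auto simp: add.commute)
qed

lemma lat_Basis: "(b::real^'n) \<in> Basis \<Longrightarrow> lattice_pt b"
  by (auto simp: Basis_vec_def lattice_pt_def axis_def)

lemma span_rep:
  fixes W :: "(real^'n) set"
  assumes "finite W" "y \<in> span W"
  obtains a where "y = (\<Sum>w\<in>W. a w *\<^sub>R w)"
  using assms span_finite[of W] by auto

lemma extend_basis:
  fixes W :: "(real^'n) set"
  assumes "independent W" "\<forall>w\<in>W. lattice_pt w"
    "\<forall>x. lattice_pt x \<and> x \<in> span W \<longrightarrow> x \<in> int_span W"
  shows "\<exists>E. lattice_basis E \<and> W \<subseteq> E"
  using assms
proof (induction "CARD('n) - card W" arbitrary: W rule: less_induct)
  case less
  have finW: "finite W" and cardW: "card W \<le> CARD('n)"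
    using independent_bound[OF less.prems(1)] by auto
  show ?case
  proof (cases "\<forall>x. lattice_pt x \<longrightarrow> x \<in> span W")
    case True
    have "span W = UNIV"
    proof -
      have "Basis \<subseteq> span W" using True lat_Basis by blast
      hence "span Basis \<subseteq> span W" by (metis span_mono span_span)
      thus ?thesis by auto
    qed
    have "int_span W = {x. lattice_pt x}"
      using less.prems int_span_lat[of W] \<open>span W = UNIV\<close> by blast
    thus ?thesis using finW less.prems(1) unfolding lattice_basis_def by auto
  next
    case False
    then obtain e0 where e0: "lattice_pt e0" "e0 \<notin> span W" by auto
    have uniq: "t = t'" if "x - t *\<^sub>R e0 \<in> span W" "x - t' *\<^sub>R e0 \<in> span W" for x t t'
    proof (rule ccontr)
      assume "t \<noteq> t'"
      have "(x - t *\<^sub>R e0) - (x - t' *\<^sub>R e0) \<in> span W" using that span_diff by blast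
      hence "(t' - t) *\<^sub>R e0 \<in> span W" by (simp add: algebra_simps)
      hence "(1/(t'-t)) *\<^sub>R ((t' - t) *\<^sub>R e0) \<in> span W" using span_scale by blast
      thus False using \<open>t \<noteq> t'\<close> e0 by simp
    qed
    define g where "g x = (THE t. x - t *\<^sub>R e0 \<in> span W)" for x
    have g: "g x = t" if "x - t *\<^sub>R e0 \<in> span W" for x t
      unfolding g_def using that uniq by blast
    define T where "T = {t. 0 < t \<and> t \<le> 1 \<and> (\<exists>x. lattice_pt x \<and> x - t *\<^sub>R e0 \<in> span W)}"
    have "1 \<in> T" unfolding T_def using e0 by (auto intro!: exI[of _ e0] span_zero)
    define R where "R = norm e0 + (\<Sum>w\<in>W. norm w)"
    have "T \<subseteq> g ` {x. lattice_pt x \<and> norm x \<le> R}"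
    proof
      fix t assume "t \<in> T"
      then obtain x where x: "lattice_pt x" "x - t *\<^sub>R e0 \<in> span W" "0 < t" "t \<le> 1"
        unfolding T_def by auto
      obtain a where a: "x - t *\<^sub>R e0 = (\<Sum>w\<in>W. a w *\<^sub>R w)" using span_rep[OF finW x(2)] by blast
      define x' where "x' = x - (\<Sum>w\<in>W. of_int \<lfloor>a w\<rfloor> *\<^sub>R w)"
      have lx': "lattice_pt x'" unfolding x'_def
        using x(1) less.prems(2) by (intro lat_diff lat_sum) auto
      have eq: "x' - t *\<^sub>R e0 = (\<Sum>w\<in>W. (a w - of_int \<lfloor>a w\<rfloor>) *\<^sub>R w)"
        unfolding x'_def using a by (simp add: scaleR_diff_left sum_subtractf algebra_simps)
      have "x' - t *\<^sub>R e0 \<in> span W" unfolding eq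
        by (intro span_sum span_scale span_base) 
      hence "g x' = t" by (rule g)
      have "norm x' = norm (t *\<^sub>R e0 + (\<Sum>w\<in>W. (a w - of_int \<lfloor>a w\<rfloor>) *\<^sub>R w))"
        using eq by (metis diff_add_cancel add.commute)
      also have "\<dots> \<le> norm (t *\<^sub>R e0) + norm (\<Sum>w\<in>W. (a w - of_int \<lfloor>a w\<rfloor>) *\<^sub>R w)"
        by (rule norm_triangle_ineq)
      also have "\<dots> \<le> norm e0 + (\<Sum>w\<in>W. norm w)"
      proof (rule add_mono)
        show "norm (t *\<^sub>R e0) \<le> norm e0" using x(3,4) by (simp add: mult_left_le_one_le)
        have "norm (\<Sum>w\<in>W. (a w - of_int \<lfloor>a w\<rfloor>) *\<^sub>R w) \<le> (\<Sum>w\<in>W. norm ((a w - of_int \<lfloor>a w\<rfloor>) *\<^sub>R w))"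
          by (rule norm_sum)
        also have "\<dots> \<le> (\<Sum>w\<in>W. norm w)"
        proof (rule sum_mono)
          fix w assume "w \<in> W"
          have "0 \<le> a w - of_int \<lfloor>a w\<rfloor>" "a w - of_int \<lfloor>a w\<rfloor> \<le> 1" by linarith+
          thus "norm ((a w - of_int \<lfloor>a w\<rfloor>) *\<^sub>R w) \<le> norm w"
            by (simp add: mult_left_le_one_le)
        qed
        finally show "norm (\<Sum>w\<in>W. (a w - of_int \<lfloor>a w\<rfloor>) *\<^sub>R w) \<le> (\<Sum>w\<in>W. norm w)" .
      qed
      finally have "norm x' \<le> R" unfolding R_def .
      thus "t \<in> g ` {x. lattice_pt x \<and> norm x \<le> R}" using lx' \<open>g x' = t\<close> by blast
    qed
    hence finT: "finite T" using lat_finite finite_surj by blast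
    define t0 where "t0 = Min T"
    have t0T: "t0 \<in> T" unfolding t0_def using finT \<open>1 \<in> T\<close> by (intro Min_in) auto
    have t0min: "t0 \<le> t" if "t \<in> T" for t unfolding t0_def using finT that by simp
    obtain x0 where x0: "lattice_pt x0" "x0 - t0 *\<^sub>R e0 \<in> span W" "0 < t0" "t0 \<le> 1"
      using t0T unfolding T_def by auto
    have x0W: "x0 \<notin> span W"
    proof
      assume "x0 \<in> span W"
      hence "x0 - (x0 - t0 *\<^sub>R e0) \<in> span W" using x0(2) span_diff by blast
      hence "(1/t0) *\<^sub>R (t0 *\<^sub>R e0) \<in> span W" using span_scale by fastforce
      thus False using x0(3) e0 by simp
    qed
    define W' where "W' = insert x0 W"
    have indW': "independent W'" unfolding W'_def using x0W less.prems(1) by (rule independent_insertI)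
    have x0nW: "x0 \<notin> W" using x0W span_base by blast
    have cardW': "card W' = card W + 1" unfolding W'_def using finW x0nW by simp
    have "card W' \<le> CARD('n)" using independent_bound[OF indW'] by simp
    hence lt: "CARD('n) - card W' < CARD('n) - card W" using cardW' by simp
    have latW': "\<forall>w\<in>W'. lattice_pt w" unfolding W'_def using less.prems(2) x0(1) by auto
    have satW': "\<forall>x. lattice_pt x \<and> x \<in> span W' \<longrightarrow> x \<in> int_span W'"
    proof (intro allI impI, elim conjE)
      fix x assume lx: "lattice_pt x" and "x \<in> span W'"
      then obtain k where k: "x - k *\<^sub>R x0 \<in> span W" unfolding W'_def using span_breakdown_eq by blast
      define r where "r = k - of_int \<lfloor>k\<rfloor>"
      define z where "z = x - of_int \<lfloor>k\<rfloor> *\<^sub>R x0"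
      have lz: "lattice_pt z" unfolding z_def using lx x0(1) by (intro lat_diff lat_scale) auto
      have zr: "z - r *\<^sub>R x0 \<in> span W" using k unfolding z_def r_def by (simp add: algebra_simps)
      have "r = 0"
      proof (rule ccontr)
        assume "r \<noteq> 0"
        hence rpos: "0 < r" "r < 1" unfolding r_def by linarith+
        have "(z - r *\<^sub>R x0) + r *\<^sub>R (x0 - t0 *\<^sub>R e0) \<in> span W"
          using zr x0(2) by (intro span_add span_scale)
        hence "z - (r * t0) *\<^sub>R e0 \<in> span W" by (simp add: algebra_simps)
        moreover have "0 < r * t0" "r * t0 < t0" using rpos x0(3) by auto
        ultimately have "r * t0 \<in> T" unfolding T_def using lz x0(4) by auto
        thus False using t0min \<open>r * t0 < t0\<close> by fastforce
      qed
      hence "z \<in> span W" using zr by simp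
      hence "z \<in> int_span W" using less.prems(3) lz by blast
      hence "z + of_int \<lfloor>k\<rfloor> *\<^sub>R x0 \<in> int_span W'"
        unfolding W'_def using finW x0nW by (intro int_span_insert) auto
      thus "x \<in> int_span W'" unfolding z_def by simp
    qed
    obtain E where "lattice_basis E" "W' \<subseteq> E" using less.hyps[OF lt indW' latW' satW'] by blast
    thus ?thesis unfolding W'_def by auto
  qed
qed




lemma cone_gen_sing: "cone_gen {p} = {c *\<^sub>R p | c. 0 \<le> c}"
  unfolding cone_gen_def by (auto intro: exI[of _ "\<lambda>_. c" for c])

lemma cone_gen_scale:
  assumes "y \<in> cone_gen S" "0 \<le> t" shows "t *\<^sub>R y \<in> cone_gen S"
proof -
  obtain c where c: "\<forall>v\<in>S. c v \<ge> 0" "y = (\<Sum>v\<in>S. c v *\<^sub>R v)" using assms unfolding cone_gen_def by auto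
  have "t *\<^sub>R y = (\<Sum>v\<in>S. (t * c v) *\<^sub>R v)" using c by (simp add: scaleR_sum_right)
  thus ?thesis unfolding cone_gen_def using c assms(2) by (auto intro!: exI[of _ "\<lambda>v. t * c v"])
qed

lemma cone_gen_subset_span: "finite S \<Longrightarrow> cone_gen S \<subseteq> span S"
proof
  fix y assume "y \<in> cone_gen S"
  then obtain c where "y = (\<Sum>v\<in>S. c v *\<^sub>R v)" unfolding cone_gen_def by auto
  moreover have "(\<Sum>v\<in>S. c v *\<^sub>R v) \<in> span S"
    by (rule span_sum, rule span_scale, rule span_base)
  ultimately show "y \<in> span S" by simp
qed

lemma sum_delta_scale: "finite S \<Longrightarrow> (\<Sum>v\<in>S. (if v = s then c else 0) *\<^sub>R (v::'a::real_vector)) = (if s \<in> S then c *\<^sub>R s else 0)"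
proof -
  assume f: "finite S"
  have e: "(\<lambda>v. (if v = s then c else 0) *\<^sub>R v) = (\<lambda>v. if v = s then c *\<^sub>R s else 0)" by auto
  show ?thesis unfolding e using f by (simp only: sum.delta)
qed

lemma gen_in_cone_gen: "finite S \<Longrightarrow> s \<in> S \<Longrightarrow> s \<in> cone_gen S"
  unfolding cone_gen_def
  by (rule CollectI, rule exI[of _ "\<lambda>v. if v = s then 1 else 0"])
     (auto simp: sum_delta_scale)

lemma span_cone_gen: "finite S \<Longrightarrow> span (cone_gen S) = span S"
proof
  assume "finite S"
  show "span (cone_gen S) \<subseteq> span S" using cone_gen_subset_span[OF \<open>finite S\<close>]
    by (metis span_mono span_span)
  show "span S \<subseteq> span (cone_gen S)" using gen_in_cone_gen[OF \<open>finite S\<close>]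
    by (intro span_mono) auto
qed

lemma dim_cone_gen: "finite S \<Longrightarrow> independent S \<Longrightarrow> dim (cone_gen S) = card S"
  by (metis dim_span span_cone_gen dim_eq_card_independent)

lemma ray_face:
  fixes S :: "(real^'n) set"
  assumes fS: "finite S" and iS: "independent S" and s: "s \<in> S"
  shows "cone_gen {s} face_of cone_gen S"
  unfolding face_of_def
proof (intro conjI ballI impI)
  show "cone_gen {s} \<subseteq> cone_gen S"
    using gen_in_cone_gen[OF fS s] cone_gen_scale by (auto simp: cone_gen_sing)
  show "convex (cone_gen {s})" unfolding cone_gen_sing convex_def
    by clarsimp (metis add_nonneg_nonneg mult_nonneg_nonneg scaleR_add_left scaleR_scaleR)
next
  fix a b x assume a: "a \<in> cone_gen S" and b: "b \<in> cone_gen S" and x: "x \<in> cone_gen {s}"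
    and xab: "x \<in> open_segment a b"
  obtain \<alpha> where \<alpha>: "\<forall>v\<in>S. \<alpha> v \<ge> 0" "a = (\<Sum>v\<in>S. \<alpha> v *\<^sub>R v)" using a unfolding cone_gen_def by auto
  obtain \<beta> where \<beta>: "\<forall>v\<in>S. \<beta> v \<ge> 0" "b = (\<Sum>v\<in>S. \<beta> v *\<^sub>R v)" using b unfolding cone_gen_def by auto
  obtain t where t: "x = t *\<^sub>R s" using x unfolding cone_gen_sing by auto
  obtain u where u: "0 < u" "u < 1" "x = (1 - u) *\<^sub>R a + u *\<^sub>R b"
    using xab by (auto simp: in_segment)
  define \<gamma> where "\<gamma> v = (1 - u) * \<alpha> v + u * \<beta> v - (if v = s then t else 0)" for v
  have "(\<Sum>v\<in>S. \<gamma> v *\<^sub>R v) = (1 - u) *\<^sub>R a + u *\<^sub>R b - t *\<^sub>R s"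
    unfolding \<gamma>_def \<alpha> \<beta> using s fS
    by (simp add: scaleR_diff_left scaleR_add_left sum.distrib sum_subtractf scaleR_sum_right
        sum_delta_scale)
  also have "\<dots> = 0" using u t by simp
  finally have z: "\<And>v. v \<in> S \<Longrightarrow> \<gamma> v = 0" using indep_coeff_zero[OF fS iS] by blast
  have ab0: "\<alpha> v = 0 \<and> \<beta> v = 0" if "v \<in> S" "v \<noteq> s" for v
  proof -
    have "(1 - u) * \<alpha> v + u * \<beta> v = 0" using z[OF that(1)] that(2) by (simp add: \<gamma>_def)
    moreover have "0 \<le> (1-u) * \<alpha> v" "0 \<le> u * \<beta> v" using \<alpha> \<beta> u that by auto
    ultimately show ?thesis using u by (simp add: add_nonneg_eq_0_iff)
  qed
  have "a = \<alpha> s *\<^sub>R s" unfolding \<alpha>(2) using fS s ab0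
    by (subst sum.remove[of S s]) (auto intro!: sum.neutral)
  thus "a \<in> cone_gen {s}" unfolding cone_gen_sing using \<alpha> s by auto
  have "b = \<beta> s *\<^sub>R s" unfolding \<beta>(2) using fS s ab0
    by (subst sum.remove[of S s]) (auto intro!: sum.neutral)
  thus "b \<in> cone_gen {s}" unfolding cone_gen_sing using \<beta> s by auto
qed

lemma reindex_comb:
  assumes "inj_on w S"
  shows "(\<exists>c. (\<forall>v\<in>w`S. c v \<in> A) \<and> y = (\<Sum>v\<in>w`S. c v *\<^sub>R v)) \<longleftrightarrow>
         (\<exists>d. (\<forall>s\<in>S. d s \<in> A) \<and> y = (\<Sum>s\<in>S. d s *\<^sub>R w s))"
proof
  assume "\<exists>c. (\<forall>v\<in>w`S. c v \<in> A) \<and> y = (\<Sum>v\<in>w`S. c v *\<^sub>R v)"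
  then obtain c where "(\<forall>v\<in>w`S. c v \<in> A)" "y = (\<Sum>v\<in>w`S. c v *\<^sub>R v)" by blast
  thus "\<exists>d. (\<forall>s\<in>S. d s \<in> A) \<and> y = (\<Sum>s\<in>S. d s *\<^sub>R w s)"
    using assms by (intro exI[of _ "c \<circ> w"]) (simp add: sum.reindex)
next
  assume "\<exists>d. (\<forall>s\<in>S. d s \<in> A) \<and> y = (\<Sum>s\<in>S. d s *\<^sub>R w s)"
  then obtain d where d: "(\<forall>s\<in>S. d s \<in> A)" "y = (\<Sum>s\<in>S. d s *\<^sub>R w s)" by blast
  show "\<exists>c. (\<forall>v\<in>w`S. c v \<in> A) \<and> y = (\<Sum>v\<in>w`S. c v *\<^sub>R v)"
  proof (intro exI[of _ "d \<circ> inv_into S w"] conjI)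
    show "\<forall>v\<in>w`S. (d \<circ> inv_into S w) v \<in> A" using d assms by (auto simp: inv_into_f_f)
    show "y = (\<Sum>v\<in>w`S. (d \<circ> inv_into S w) v *\<^sub>R v)" using d assms
      by (simp add: sum.reindex inv_into_f_f)
  qed
qed




locale rsetup =
  fixes \<Delta> :: "(real^'n) set" and \<Sigma> :: "(real^'n) set set" and V :: "(real^'n) set"
  assumes convD: "convex \<Delta>" and bndD: "bounded \<Delta>" and zD: "0 \<in> \<Delta>" and polyD: "polytope \<Delta>"
  and latV: "\<And>m. m \<in> V \<Longrightarrow> lattice_pt m"
  and VD: "\<And>m x. m \<in> V \<Longrightarrow> x \<in> \<Delta> \<Longrightarrow> m \<bullet> x \<ge> -1"
  and bip: "\<And>y. (\<forall>m\<in>V. m \<bullet> y \<ge> -1) \<Longrightarrow> y \<in> \<Delta>"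
  and dmax: "Delta_maximal \<Delta> \<Sigma>"
begin

lemma fan: "is_fan \<Sigma>" using dmax unfolding Delta_maximal_def by auto

lemma rays: "fan_rays \<Sigma> = {cone_gen {p} | p. p \<in> \<Delta> \<and> lattice_pt p \<and> p \<noteq> 0}"
  using dmax unfolding Delta_maximal_def by auto

lemma lat_on_ray:
  assumes "\<sigma> \<in> \<Sigma>" "\<sigma> = cone_gen S" "finite S" "p \<in> \<Delta>" "lattice_pt p" "p \<noteq> 0" "p \<in> \<sigma>"
  shows "\<exists>s\<in>S. \<exists>c>0. p = c *\<^sub>R s"
proof -
  have "cone_gen {p} \<in> fan_rays \<Sigma>" using rays assms by auto
  hence pS: "cone_gen {p} \<in> \<Sigma>" unfolding fan_rays_def by auto
  have "(\<sigma> \<inter> cone_gen {p}) face_of \<sigma>" using fan pS assms(1) unfolding is_fan_def by blast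
  moreover have "\<sigma> \<inter> cone_gen {p} = cone_gen {p}"
    using assms(7) cone_gen_scale assms(2) by (auto simp: cone_gen_sing)
  ultimately have face: "cone_gen {p} face_of \<sigma>" by simp
  obtain d where d: "\<forall>v\<in>S. d v \<ge> 0" "p = (\<Sum>v\<in>S. d v *\<^sub>R v)"
    using assms(2,7) unfolding cone_gen_def by auto
  obtain a where a: "a \<in> S" "d a \<noteq> 0 \<and> a \<noteq> 0"
  proof (rule ccontr)
    assume "\<not> thesis"
    hence "\<forall>v\<in>S. d v *\<^sub>R v = 0" using that by auto
    hence "(\<Sum>v\<in>S. d v *\<^sub>R v) = 0" by (intro sum.neutral) blast
    hence "p = 0" using d(2) by simp
    thus False using assms(6) by simp
  qed
  have dapos: "d a > 0" using d(1) a by force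
  define q1 where "q1 = (2 * d a) *\<^sub>R a"
  define q2 where "q2 = 2 *\<^sub>R (\<Sum>v\<in>S. (if v = a then 0 else d v) *\<^sub>R v)"
  have q2': "(\<Sum>v\<in>S. (if v = a then 0 else d v) *\<^sub>R v) = p - d a *\<^sub>R a"
  proof -
    have "(\<Sum>v\<in>S. (if v = a then 0 else d v) *\<^sub>R v) = (\<Sum>v\<in>S. d v *\<^sub>R v - (if v = a then d a else 0) *\<^sub>R v)"
      by (rule sum.cong) auto
    also have "\<dots> = p - d a *\<^sub>R a" using d(2) a(1) assms(3) by (simp add: sum_subtractf sum_delta_scale)
    finally show ?thesis .
  qed
  have q1s: "q1 \<in> \<sigma>" unfolding q1_def assms(2) using a dapos gen_in_cone_gen[OF assms(3) a(1)]
    by (metis cone_gen_scale mult_nonneg_nonneg zero_le_numeral less_imp_le scaleR_scaleR)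
  have q2s: "q2 \<in> \<sigma>" unfolding q2_def assms(2) cone_gen_def using d(1)
    by (auto simp: scaleR_sum_right intro!: exI[of _ "\<lambda>v. 2 * (if v = a then 0 else d v)"])
  have mid: "p = midpoint q1 q2" unfolding midpoint_def q1_def q2_def q2'
    by (simp add: algebra_simps)
  show ?thesis
  proof (cases "q1 = q2")
    case True
    hence "p = (2 * d a) *\<^sub>R a" using mid q1_def by (simp add: midpoint_def scaleR_2)
    thus ?thesis using a dapos by (intro bexI[of _ a] exI[of _ "2 * d a"]) auto
  next
    case False
    hence "p \<in> open_segment q1 q2" using mid by simp
    hence "q1 \<in> cone_gen {p}" using face q1s q2s \<open>p \<in> \<sigma>\<close> gen_in_cone_gen[of "{p}" p]
      unfolding face_of_def by blast
    then obtain t where t: "0 \<le> t" "q1 = t *\<^sub>R p" unfolding cone_gen_sing by auto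
    have "t \<noteq> 0" using t a dapos unfolding q1_def by auto
    have "p = (1/t) *\<^sub>R (t *\<^sub>R p)" using \<open>t \<noteq> 0\<close> by simp
    also have "\<dots> = (1/t) *\<^sub>R ((2 * d a) *\<^sub>R a)" using t unfolding q1_def by simp
    also have "\<dots> = ((2 * d a) / t) *\<^sub>R a" by simp
    finally have "p = ((2 * d a) / t) *\<^sub>R a" .
    moreover have "(2 * d a) / t > 0" using t \<open>t \<noteq> 0\<close> dapos by simp
    ultimately show ?thesis using a by blast
  qed
qed

lemma ray_has_lat:
  assumes "\<sigma> \<in> \<Sigma>" "\<sigma> = cone_gen S" "finite S" "independent S" "s \<in> S"
  shows "\<exists>c>0. c *\<^sub>R s \<in> \<Delta> \<and> lattice_pt (c *\<^sub>R s)"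
proof -
  have "cone_gen {s} face_of \<sigma>" using ray_face assms by blast
  moreover have "cone_gen {s} \<noteq> {}" using gen_in_cone_gen[of "{s}" s] by auto
  ultimately have "cone_gen {s} \<in> \<Sigma>" using fan assms(1) unfolding is_fan_def by blast
  moreover have s0: "s \<noteq> 0" using assms(4,5) dependent_zero by blast
  moreover have "dim (cone_gen {s}) = dim {s}"
    by (metis dim_span span_cone_gen finite.emptyI finite.insertI)
  hence "dim (cone_gen {s}) = 1" using s0 by simp
  ultimately have "cone_gen {s} \<in> fan_rays \<Sigma>" unfolding fan_rays_def by auto
  then obtain p where p: "cone_gen {s} = cone_gen {p}" "p \<in> \<Delta>" "lattice_pt p" "p \<noteq> 0"
    using rays by auto
  have "p \<in> cone_gen {s}" using p(1) gen_in_cone_gen[of "{p}" p] by auto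
  then obtain c where "0 \<le> c" "p = c *\<^sub>R s" unfolding cone_gen_sing by auto
  thus ?thesis using p by (intro exI[of _ c]) auto
qed

lemma prim:
  assumes "s \<noteq> 0" "\<exists>c>0. c *\<^sub>R s \<in> \<Delta> \<and> lattice_pt (c *\<^sub>R s)"
  shows "\<exists>k>0. k *\<^sub>R s \<in> \<Delta> \<and> lattice_pt (k *\<^sub>R s) \<and>
           (\<forall>t. 0 < t \<and> t < 1 \<longrightarrow> \<not> lattice_pt (t *\<^sub>R (k *\<^sub>R s)))"
proof -
  define C where "C = {c. 0 < c \<and> c *\<^sub>R s \<in> \<Delta> \<and> lattice_pt (c *\<^sub>R s)}"
  obtain R where R: "\<forall>x\<in>\<Delta>. norm x \<le> R" using bndD bounded_iff by blast
  have "(\<lambda>c. c *\<^sub>R s) ` C \<subseteq> {x. lattice_pt x \<and> norm x \<le> R}" unfolding C_def using R by auto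
  hence "finite ((\<lambda>c. c *\<^sub>R s) ` C)" using lat_finite finite_subset by blast
  moreover have "inj_on (\<lambda>c. c *\<^sub>R s) C" using assms(1) by (auto simp: inj_on_def)
  ultimately have finC: "finite C" using finite_imageD by blast
  have "C \<noteq> {}" using assms(2) unfolding C_def by auto
  define k where "k = Min C"
  have kC: "k \<in> C" unfolding k_def using finC \<open>C \<noteq> {}\<close> by simp
  have kmin: "\<And>c. c \<in> C \<Longrightarrow> k \<le> c" unfolding k_def using finC by simp
  have "\<not> lattice_pt (t *\<^sub>R (k *\<^sub>R s))" if t: "0 < t" "t < 1" for t
  proof
    assume l: "lattice_pt (t *\<^sub>R (k *\<^sub>R s))"
    have "(1 - t) *\<^sub>R 0 + t *\<^sub>R (k *\<^sub>R s) \<in> \<Delta>" using convD zD kC t unfolding C_def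
      by (intro convexD) auto
    hence "t * k \<in> C" using l t kC unfolding C_def by auto
    hence "k \<le> t * k" by (rule kmin)
    moreover have "t * k < k" using t kC unfolding C_def by auto
    ultimately show False by simp
  qed
  thus ?thesis using kC unfolding C_def by blast
qed

lemma facet_cone:
  assumes "finite W" "W \<noteq> {}" "W \<subseteq> \<Delta>" "m \<in> V" "\<forall>w\<in>W. m \<bullet> w = -1"
  shows "\<exists>\<tau>\<in>maximal_cones_of_face_fan \<Delta>. cone_gen W \<subseteq> \<tau>"
proof -
  define G where "G = \<Delta> \<inter> {x. (-m) \<bullet> x = 1}"
  have "G face_of \<Delta>" unfolding G_def using convD VD[OF assms(4)]
    by (intro face_of_Int_supporting_hyperplane_le) auto
  moreover have "G \<noteq> {}" using assms(2,3,5) unfolding G_def by auto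
  moreover have "0 \<notin> G" unfolding G_def by simp
  hence "G \<noteq> \<Delta>" using zD by auto
  ultimately obtain F where F: "F facet_of \<Delta>" "G \<subseteq> F"
    using face_of_polyhedron_subset_facet polytope_imp_polyhedron polyD by metis
  have WF: "W \<subseteq> F" using F assms(3,5) unfolding G_def by auto
  have cF: "convex F" using F facet_of_imp_face_of face_of_imp_convex by blast
  have "cone_gen W \<subseteq> cone_over F"
  proof
    fix y assume "y \<in> cone_gen W"
    then obtain c where c: "\<forall>v\<in>W. c v \<ge> 0" "y = (\<Sum>v\<in>W. c v *\<^sub>R v)" unfolding cone_gen_def by auto
    define C where "C = (\<Sum>v\<in>W. c v)"
    show "y \<in> cone_over F"
    proof (cases "C = 0")
      case True
      hence "\<forall>v\<in>W. c v = 0" using c(1) assms(1) sum_nonneg_eq_0_iff unfolding C_def by blast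
      hence "y = 0" using c(2) by simp
      obtain w where "w \<in> W" using assms(2) by auto
      hence "y = 0 *\<^sub>R w \<and> w \<in> F" using WF \<open>y = 0\<close> by auto
      thus ?thesis unfolding cone_over_def by blast
    next
      case False
      have Cpos: "C > 0" using False c(1) sum_nonneg unfolding C_def by (metis order_le_less)
      have "(\<Sum>v\<in>W. (c v / C) *\<^sub>R v) \<in> F"
        using assms(1) cF WF c(1) Cpos
        by (intro convex_sum) (auto simp: C_def sum_divide_distrib[symmetric])
      moreover have "y = C *\<^sub>R (\<Sum>v\<in>W. (c v / C) *\<^sub>R v)"
        using c(2) Cpos by (simp add: scaleR_sum_right)
      ultimately show ?thesis unfolding cone_over_def using Cpos by force
    qed
  qed
  thus ?thesis unfolding maximal_cones_of_face_fan_def using F by blast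
qed

end



lemma int_gt_m2: "(x::real) \<in> \<int> \<Longrightarrow> x > -2 \<Longrightarrow> x \<ge> -1"
proof (elim Ints_cases)
  fix z assume "x = of_int z" "x > -2"
  hence "of_int (-2) < (of_int z :: real)" by simp
  hence "-2 < z" by (simp only: of_int_less_iff)
  hence "of_int (-1) \<le> (of_int z :: real)" by (simp only: of_int_le_iff)
  thus "x \<ge> -1" using \<open>x = of_int z\<close> by simp
qed
lemma int_eq_m2: "(x::real) \<in> \<int> \<Longrightarrow> x < -1 \<Longrightarrow> x \<ge> -2 \<Longrightarrow> x = -2"
proof (elim Ints_cases)
  fix z assume "x = of_int z" "x < -1" "x \<ge> -2"
  hence "of_int z < (of_int (-1) :: real)" "of_int (-2) \<le> (of_int z :: real)" by simp_all
  hence "z < -1" "-2 \<le> z" by (simp only: of_int_less_iff of_int_le_iff)+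
  hence "z = -2" by simp
  thus "x = -2" using \<open>x = of_int z\<close> by simp
qed

lemma lat_sum2: "(\<And>v. v\<in>S \<Longrightarrow> c v \<in> \<int> \<and> lattice_pt (u v)) \<Longrightarrow> lattice_pt (\<Sum>v\<in>S. c v *\<^sub>R u v)"
proof (induction S rule: infinite_finite_induct)
  case (insert x F) then show ?case by (simp add: lat_add lat_scale)
qed auto

context rsetup begin

lemma unimod:
  assumes \<sigma>\<Sigma>: "\<sigma> \<in> \<Sigma>" and \<sigma>S: "\<sigma> = cone_gen S" and fS: "finite S" and iS: "independent S"
    and cond: "card S \<le> 3 \<or> (card S = 4 \<and> \<not>(\<exists>\<tau>\<in>maximal_cones_of_face_fan \<Delta>. \<sigma> \<subseteq> \<tau>))"
  shows "unimodular_cone \<sigma>"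
proof -
  have s0: "\<And>s. s\<in>S \<Longrightarrow> s \<noteq> 0" using iS dependent_zero by blast
  have "\<forall>s\<in>S. \<exists>k>0. k *\<^sub>R s \<in> \<Delta> \<and> lattice_pt (k *\<^sub>R s) \<and> (\<forall>t. 0<t \<and> t<1 \<longrightarrow> \<not> lattice_pt (t *\<^sub>R (k *\<^sub>R s)))"
    using prim ray_has_lat[OF \<sigma>\<Sigma> \<sigma>S fS iS] s0 by blast
  hence "\<exists>k. \<forall>s\<in>S. 0 < k s \<and> k s *\<^sub>R s \<in> \<Delta> \<and> lattice_pt (k s *\<^sub>R s) \<and>
      (\<forall>t. 0<t \<and> t<1 \<longrightarrow> \<not> lattice_pt (t *\<^sub>R (k s *\<^sub>R s)))" by (rule bchoice)
  then obtain k where k0: "\<forall>s\<in>S. 0 < k s \<and> k s *\<^sub>R s \<in> \<Delta> \<and> lattice_pt (k s *\<^sub>R s) \<and>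
      (\<forall>t. 0<t \<and> t<1 \<longrightarrow> \<not> lattice_pt (t *\<^sub>R (k s *\<^sub>R s)))" by blast
  hence k: "\<And>s. s\<in>S \<Longrightarrow> 0 < k s \<and> k s *\<^sub>R s \<in> \<Delta> \<and> lattice_pt (k s *\<^sub>R s) \<and>
      (\<forall>t. 0<t \<and> t<1 \<longrightarrow> \<not> lattice_pt (t *\<^sub>R (k s *\<^sub>R s)))" by blast
  define w where "w s = k s *\<^sub>R s" for s
  have kpos: "\<And>s. s \<in> S \<Longrightarrow> 0 < k s" using k by blast
  have wD: "\<And>s. s \<in> S \<Longrightarrow> w s \<in> \<Delta>" using k unfolding w_def by blast
  have wlat: "\<And>s. s \<in> S \<Longrightarrow> lattice_pt (w s)" using k unfolding w_def by blast
  have wprim: "\<And>s t. s \<in> S \<Longrightarrow> 0 < t \<Longrightarrow> t < 1 \<Longrightarrow> \<not> lattice_pt (t *\<^sub>R w s)"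
    using k unfolding w_def by blast
  have conv: "\<And>c. (\<Sum>s\<in>S. c s *\<^sub>R w s) = (\<Sum>s\<in>S. (c s * k s) *\<^sub>R s)"
    by (simp add: w_def)
  have wind: "c s = 0" if "(\<Sum>s\<in>S. c s *\<^sub>R w s) = 0" "s \<in> S" for c s
  proof -
    have "(\<Sum>s\<in>S. (c s * k s) *\<^sub>R s) = 0" using that(1) conv by simp
    from indep_coeff_zero[OF fS iS this that(2)] have "c s * k s = 0" .
    thus ?thesis using kpos[OF that(2)] by simp
  qed
  have spanW: "span (w`S) = span S"
  proof
    have "w`S \<subseteq> span S" unfolding w_def by (auto intro: span_scale span_base)
    from span_mono[OF this] show "span (w`S) \<subseteq> span S" by (simp only: span_span)
    have "s \<in> span (w`S)" if "s \<in> S" for s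
    proof -
      have "(1 / k s) *\<^sub>R w s \<in> span (w`S)" using that by (intro span_scale span_base) auto
      thus ?thesis using kpos[OF that] unfolding w_def by simp
    qed
    hence "S \<subseteq> span (w`S)" by blast
    from span_mono[OF this] show "span S \<subseteq> span (w`S)" by (simp only: span_span)
  qed
  have dS: "dim (span S) = card S" by (simp only: dim_span dim_eq_card_independent[OF iS])
  have c1: "w`S \<subseteq> span S" using span_superset[of "w`S"] unfolding spanW .
  have c2: "span S \<subseteq> span (w`S)" unfolding spanW by (rule order_refl)
  have c3: "card (w`S) \<le> dim (span S)" unfolding dS by (rule card_image_le[OF fS])
  have indW: "independent (w`S)"
    by (rule card_le_dim_spanning[OF c1 c2 _ c3]) (rule finite_imageI[OF fS])
  have injW: "inj_on w S"
  proof (rule eq_card_imp_inj_on[OF fS])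
    have "card (w`S) = dim (w`S)" by (rule dim_eq_card_independent[OF indW, symmetric])
    also have "\<dots> = dim (span (w`S))" by (rule dim_span[symmetric])
    also have "\<dots> = card S" unfolding spanW by (rule dS)
    finally show "card (w`S) = card S" .
  qed
  have memW: "y \<in> \<sigma> \<longleftrightarrow> (\<exists>d. (\<forall>s\<in>S. d s \<in> {0..}) \<and> y = (\<Sum>s\<in>S. d s *\<^sub>R w s))" for y
  proof
    assume "y \<in> \<sigma>"
    then obtain c where c: "\<forall>s\<in>S. c s \<ge> 0" "y = (\<Sum>s\<in>S. c s *\<^sub>R s)" unfolding \<sigma>S cone_gen_def by auto
    have "y = (\<Sum>s\<in>S. (c s / k s) *\<^sub>R w s)" unfolding c(2) w_def
    proof (intro sum.cong refl)
      fix s assume "s \<in> S"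
      hence "k s \<noteq> 0" using kpos by force
      thus "c s *\<^sub>R s = (c s / k s) *\<^sub>R (k s *\<^sub>R s)" by simp
    qed
    thus "\<exists>d. (\<forall>s\<in>S. d s \<in> {0..}) \<and> y = (\<Sum>s\<in>S. d s *\<^sub>R w s)" using c(1) kpos
      by (intro exI[of _ "\<lambda>s. c s / k s"]) (auto intro!: divide_nonneg_pos)
  next
    assume "\<exists>d. (\<forall>s\<in>S. d s \<in> {0..}) \<and> y = (\<Sum>s\<in>S. d s *\<^sub>R w s)"
    then obtain d where d: "\<forall>s\<in>S. d s \<ge> 0" "y = (\<Sum>s\<in>S. d s *\<^sub>R w s)" by auto
    have "\<forall>v\<in>S. 0 \<le> d v * k v" using d(1) kpos by (simp add: less_imp_le)
    thus "y \<in> \<sigma>" unfolding \<sigma>S cone_gen_def using d(2) conv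
      by (intro CollectI exI[of _ "\<lambda>s. d s * k s"]) auto
  qed
  have \<sigma>W: "\<sigma> = cone_gen (w`S)"
  proof -
    have "cone_gen (w`S) = {y. \<exists>c. (\<forall>v\<in>w`S. c v \<in> {0..}) \<and> y = (\<Sum>v\<in>w`S. c v *\<^sub>R v)}"
      unfolding cone_gen_def by simp
    also have "\<dots> = {y. \<exists>d. (\<forall>s\<in>S. d s \<in> {0..}) \<and> y = (\<Sum>s\<in>S. d s *\<^sub>R w s)}"
      by (rule Collect_cong, rule reindex_comb[OF injW])
    also have "\<dots> = \<sigma>" by (rule set_eqI) (simp only: mem_Collect_eq memW)
    finally show ?thesis by simp
  qed
  have Q: "z \<notin> \<Delta>" if b: "\<forall>s\<in>S. 0 \<le> b s \<and> b s < 1" "\<exists>s\<in>S. b s \<noteq> 0"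
    and z: "z = (\<Sum>s\<in>S. b s *\<^sub>R w s)" "lattice_pt z" for b z
  proof
    assume zD: "z \<in> \<Delta>"
    have z\<sigma>: "z \<in> \<sigma>" using memW b z by auto
    have z0: "z \<noteq> 0"
    proof
      assume "z = 0"
      hence "\<And>s. s \<in> S \<Longrightarrow> b s = 0" using wind z(1) by simp
      thus False using b(2) by blast
    qed
    obtain s0 c where s0: "s0 \<in> S" "c > 0" "z = c *\<^sub>R s0"
      using lat_on_ray[OF \<sigma>\<Sigma> \<sigma>S fS zD z(2) z0 z\<sigma>] by blast
    have "(\<Sum>s\<in>S. (b s * k s - (if s = s0 then c else 0)) *\<^sub>R s) = z - c *\<^sub>R s0"
      using fS s0(1) by (simp add: scaleR_diff_left sum_subtractf z(1) conv sum_delta_scale)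
    also have "\<dots> = 0" using s0 by simp
    finally have zsum: "(\<Sum>s\<in>S. (b s * k s - (if s = s0 then c else 0)) *\<^sub>R s) = 0" .
    have zz: "\<And>s. s \<in> S \<Longrightarrow> b s * k s - (if s = s0 then c else 0) = 0"
      by (rule indep_coeff_zero[OF fS iS zsum])
    have bz: "b s = 0" if "s \<in> S" "s \<noteq> s0" for s using zz[OF that(1)] that kpos[OF that(1)] by simp
    have bs0: "b s0 * k s0 = c" using zz[OF s0(1)] by simp
    hence "0 < b s0 * k s0" using s0(2) by simp
    hence bpos: "b s0 > 0" using kpos[OF s0(1)] by (simp add: zero_less_mult_iff)
    have "z = b s0 *\<^sub>R w s0" unfolding s0(3) w_def using bs0 by simp
    thus False using wprim[OF s0(1) bpos] b(1) s0(1) z(2) by auto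
  qed
  have mz: "m \<bullet> z = (\<Sum>s\<in>S. b s * (m \<bullet> w s))" if "z = (\<Sum>s\<in>S. b s *\<^sub>R w s)" for m z b
    using that by (simp add: inner_sum_right)
  have mzge: "m \<bullet> z \<ge> - (\<Sum>s\<in>S. b s)" if "z = (\<Sum>s\<in>S. b s *\<^sub>R w s)" "\<forall>s\<in>S. 0 \<le> b s" "m \<in> V"
    for m z b
  proof -
    have "(\<Sum>s\<in>S. b s * (-1)) \<le> (\<Sum>s\<in>S. b s * (m \<bullet> w s))"
      using that VD[OF that(3) wD] by (intro sum_mono mult_left_mono) auto
    thus ?thesis using mz[OF that(1)] by (simp add: sum_negf)
  qed
  have R: "z \<in> \<Delta>" if "\<forall>s\<in>S. 0 \<le> b s" "z = (\<Sum>s\<in>S. b s *\<^sub>R w s)" "lattice_pt z" "(\<Sum>s\<in>S. b s) < 2"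
    for b z
  proof (rule bip, intro ballI)
    fix m assume m: "m \<in> V"
    have "m \<bullet> z > -2" using mzge[OF that(2,1) m] that(4) by simp
    thus "m \<bullet> z \<ge> -1" using int_gt_m2 lat_inner[OF latV[OF m] that(3)] by blast
  qed
  have R': "\<exists>m\<in>V. \<forall>s\<in>S. b s > 0 \<longrightarrow> m \<bullet> w s = -1"
    if "\<forall>s\<in>S. 0 \<le> b s" "z = (\<Sum>s\<in>S. b s *\<^sub>R w s)" "lattice_pt z" "(\<Sum>s\<in>S. b s) = 2" "z \<notin> \<Delta>"
    for b z
  proof -
    have "\<not> (\<forall>m\<in>V. m \<bullet> z \<ge> -1)" using bip that(5) by blast
    then obtain m where m: "m \<in> V" "m \<bullet> z < -1" by (auto simp: not_le)
    have "m \<bullet> z \<ge> -2" using mzge[OF that(2,1) m(1)] that(4) by simp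
    hence "m \<bullet> z = -2" by (rule int_eq_m2[OF lat_inner[OF latV[OF m(1)] that(3)] m(2)])
    hence "(\<Sum>s\<in>S. b s * (m \<bullet> w s + 1)) = 0"
      using mz[OF that(2)] that(4) by (simp add: distrib_left sum.distrib)
    moreover have "\<forall>s\<in>S. 0 \<le> b s * (m \<bullet> w s + 1)"
    proof
      fix s assume "s \<in> S"
      hence "0 \<le> b s" "0 \<le> m \<bullet> w s + 1" using that(1) VD[OF m(1) wD[of s]] by auto
      thus "0 \<le> b s * (m \<bullet> w s + 1)" by simp
    qed
    ultimately have "\<forall>s\<in>S. b s * (m \<bullet> w s + 1) = 0"
      by (metis (no_types, lifting) sum_nonneg_eq_0_iff[OF fS])
    thus ?thesis using m(1) by (intro bexI[of _ m]) auto
  qed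
  have sat: "\<forall>x. lattice_pt x \<and> x \<in> span (w`S) \<longrightarrow> x \<in> int_span (w`S)"
  proof (intro allI impI, elim conjE)
    fix x assume lx: "lattice_pt x" and xs: "x \<in> span (w`S)"
    have "\<exists>c. (\<forall>v\<in>w`S. c v \<in> UNIV) \<and> x = (\<Sum>v\<in>w`S. c v *\<^sub>R v)"
      using xs span_finite[of "w`S"] fS by auto
    hence "\<exists>d. (\<forall>s\<in>S. d s \<in> UNIV) \<and> x = (\<Sum>s\<in>S. d s *\<^sub>R w s)"
      by (simp only: reindex_comb[OF injW])
    then obtain a where a: "x = (\<Sum>s\<in>S. a s *\<^sub>R w s)" by blast
    have intW: "x \<in> int_span (w`S)" if "\<forall>s\<in>S. d s \<in> \<int>" "x = (\<Sum>s\<in>S. d s *\<^sub>R w s)" for x d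
    proof -
      have "\<exists>d. (\<forall>s\<in>S. d s \<in> \<int>) \<and> x = (\<Sum>s\<in>S. d s *\<^sub>R w s)" using that by blast
      hence "\<exists>c. (\<forall>v\<in>w`S. c v \<in> \<int>) \<and> x = (\<Sum>v\<in>w`S. c v *\<^sub>R v)"
        by (simp only: reindex_comb[OF injW])
      thus ?thesis by (simp only: int_span_def mem_Collect_eq)
    qed
    define f where "f s = a s - of_int \<lfloor>a s\<rfloor>" for s
    define x' where "x' = (\<Sum>s\<in>S. f s *\<^sub>R w s)"
    have x'eq: "x' = x - (\<Sum>s\<in>S. of_int \<lfloor>a s\<rfloor> *\<^sub>R w s)" unfolding x'_def f_def a
      by (simp add: scaleR_diff_left sum_subtractf)
    have lx': "lattice_pt x'" unfolding x'eq using lx wlat by (intro lat_diff lat_sum2) auto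
    have f01: "\<And>s. 0 \<le> f s \<and> f s < 1" unfolding f_def by linarith
    show "x \<in> int_span (w`S)"
    proof (cases "\<forall>s\<in>S. f s = 0")
      case True
      hence "x = (\<Sum>s\<in>S. of_int \<lfloor>a s\<rfloor> *\<^sub>R w s)" using x'eq unfolding x'_def by simp
      thus ?thesis by (intro intW) auto
    next
      case False
      then obtain s1 where s1: "s1 \<in> S" "f s1 \<noteq> 0" by blast
      define g where "g s = (if f s > 0 then 1 - f s else 0)" for s
      define y where "y = (\<Sum>s\<in>S. g s *\<^sub>R w s)"
      have gf: "g s = (if f s > 0 then 1 else 0) - f s" for s using f01[of s] unfolding g_def
        by auto
      have yeq: "y = (\<Sum>s\<in>S. (if f s > 0 then 1 else 0) *\<^sub>R w s) - x'"
        unfolding y_def x'_def gf by (simp only: scaleR_diff_left sum_subtractf)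
      have ly: "lattice_pt y" unfolding yeq using lx' wlat by (intro lat_diff lat_sum2) auto
      have g01: "0 \<le> g s \<and> g s < 1" for s unfolding g_def using f01[of s] by auto
      have f1pos: "f s1 > 0" using f01[of s1] s1 by simp
      have f0: "\<forall>s\<in>S. 0 \<le> f s \<and> f s < 1" using f01 by blast
      have g0: "\<forall>s\<in>S. 0 \<le> g s \<and> g s < 1" using g01 by blast
      have x'D: "x' \<notin> \<Delta>" using Q[OF f0 _ x'_def lx'] s1 by blast
      have "g s1 \<noteq> 0" unfolding g_def using f1pos f01[of s1] by auto
      hence yD: "y \<notin> \<Delta>" using Q[OF g0 _ y_def ly] s1 by blast
      have f0': "\<forall>s\<in>S. 0 \<le> f s" using f0 by blast
      have g0': "\<forall>s\<in>S. 0 \<le> g s" using g0 by blast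
      have sf: "(\<Sum>s\<in>S. f s) \<ge> 2"
      proof (rule ccontr)
        assume "\<not> ?thesis" hence "(\<Sum>s\<in>S. f s) < 2" by simp
        from R[OF f0' x'_def lx' this] x'D show False by simp
      qed
      have sg: "(\<Sum>s\<in>S. g s) \<ge> 2"
      proof (rule ccontr)
        assume "\<not> ?thesis" hence "(\<Sum>s\<in>S. g s) < 2" by simp
        from R[OF g0' y_def ly this] x'D yD show False by simp
      qed
      have fg1: "f s + g s \<le> 1" for s unfolding g_def using f01[of s] by auto
      have "(\<Sum>s\<in>S. f s + g s) \<le> (\<Sum>s\<in>S. 1)" by (intro sum_mono fg1)
      hence sfg: "(\<Sum>s\<in>S. f s) + (\<Sum>s\<in>S. g s) \<le> real (card S)" by (simp add: sum.distrib)
      hence c4: "card S = 4" "\<not>(\<exists>\<tau>\<in>maximal_cones_of_face_fan \<Delta>. \<sigma> \<subseteq> \<tau>)" using cond sf sg by auto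
      have sf2: "(\<Sum>s\<in>S. f s) = 2" using sfg sf sg c4 by simp
      have "(\<Sum>s\<in>S. 1 - (f s + g s)) = 0" using sfg sf sg c4
        by (simp add: sum_subtractf sum.distrib)
      moreover have "\<forall>s\<in>S. 0 \<le> 1 - (f s + g s)" using fg1 by simp
      ultimately have "\<forall>s\<in>S. 1 - (f s + g s) = 0"
        by (metis (no_types, lifting) sum_nonneg_eq_0_iff[OF fS])
      hence fpos: "\<forall>s\<in>S. f s > 0" unfolding g_def using f01 by (auto split: if_splits)
      obtain m where m: "m \<in> V" "\<forall>s\<in>S. f s > 0 \<longrightarrow> m \<bullet> w s = -1"
        using R'[OF f0' x'_def lx' sf2 x'D] by blast
      have "\<exists>\<tau>\<in>maximal_cones_of_face_fan \<Delta>. cone_gen (w`S) \<subseteq> \<tau>"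
        using fS c4(1) wD m fpos by (intro facet_cone[of "w`S" m]) auto
      thus ?thesis using c4(2) \<sigma>W by simp
    qed
  qed
  obtain E where "lattice_basis E" "w`S \<subseteq> E"
    using extend_basis[OF indW _ sat] wlat by blast
  thus ?thesis unfolding unimodular_cone_def using \<sigma>W by blast
qed

end



lemma setup_from_reflexive:
  fixes \<Delta> :: "(real^'n) set"
  assumes "reflexive_polytope \<Delta>" "Delta_maximal \<Delta> \<Sigma>"
  shows "\<exists>V. rsetup \<Delta> \<Sigma> V"
proof -
  obtain S0 where S0: "finite S0" "\<Delta> = convex hull S0"
    using assms(1) unfolding reflexive_polytope_def lattice_polytope_def by auto
  obtain V where V: "finite V" "\<forall>x\<in>V. lattice_pt x" "dual_polytope \<Delta> = convex hull V"
    using assms(1) unfolding reflexive_polytope_def lattice_polytope_def by auto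
  have cD: "convex \<Delta>" using S0 by simp
  have compD: "compact \<Delta>" using S0 by (simp add: compact_convex_hull finite_imp_compact)
  have zD: "0 \<in> \<Delta>" using assms(1) interior_subset unfolding reflexive_polytope_def by blast
  have pD: "polytope \<Delta>" using S0 unfolding polytope_def by blast
  have VD: "m \<bullet> x \<ge> -1" if "m \<in> V" "x \<in> \<Delta>" for m x
  proof -
    have "m \<in> dual_polytope \<Delta>" using V(3) that(1) hull_inc by fastforce
    thus ?thesis using that(2) unfolding dual_polytope_def by auto
  qed
  have bip: "y \<in> \<Delta>" if H: "\<forall>m\<in>V. m \<bullet> y \<ge> -1" for y
  proof (rule ccontr)
    assume "y \<notin> \<Delta>"
    then obtain a b where ab: "a \<bullet> y < b" "\<forall>x\<in>\<Delta>. b < a \<bullet> x"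
      using separating_hyperplane_closed_point[OF cD compact_imp_closed[OF compD]] by blast
    have bneg: "b < 0" using ab(2) zD by force
    define m where "m = (-1/b) *\<^sub>R a"
    have "m \<in> dual_polytope \<Delta>" unfolding dual_polytope_def
    proof (intro CollectI ballI)
      fix x assume "x \<in> \<Delta>"
      hence "b < a \<bullet> x" using ab by auto
      hence "(-1/b) * b \<le> (-1/b) * (a \<bullet> x)" using bneg by (intro mult_left_mono) auto
      thus "m \<bullet> x \<ge> -1" using bneg unfolding m_def by simp
    qed
    hence mhull: "m \<in> convex hull V" using V(3) by simp
    have "convex {u. u \<bullet> y \<ge> -1}" by (subst inner_commute) (rule convex_halfspace_ge)
    moreover have "V \<subseteq> {u. u \<bullet> y \<ge> -1}" using H by auto
    ultimately have "convex hull V \<subseteq> {u. u \<bullet> y \<ge> -1}" by (simp add: hull_minimal)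
    hence "m \<bullet> y \<ge> -1" using mhull by auto
    moreover have "(-1/b) * (a \<bullet> y) < (-1/b) * b" using ab(1) bneg by (intro mult_strict_left_mono) auto
    hence "m \<bullet> y < -1" using bneg unfolding m_def by simp
    ultimately show False by simp
  qed
  show ?thesis
    by (rule exI[of _ V], unfold_locales)
       (use cD compD zD pD V(2) VD bip assms(2) in \<open>auto intro: compact_imp_bounded\<close>)
qed

theorem proposition2p1:
  fixes \<Delta> :: "(real^'n) set" and \<Sigma> :: "(real^'n) set set"
  assumes "reflexive_polytope \<Delta>"
    and "Delta_maximal \<Delta> \<Sigma>"
  shows "(\<forall>\<sigma>\<in>\<Sigma>. dim \<sigma> \<le> 3 \<longrightarrow> unimodular_cone \<sigma>) \<and>
         (\<forall>\<sigma>\<in>\<Sigma>. dim \<sigma> = 4 \<and> \<not> (\<exists>\<tau>\<in>maximal_cones_of_face_fan \<Delta>. \<sigma> \<subseteq> \<tau>)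
              \<longrightarrow> unimodular_cone \<sigma>)"
proof -
  obtain V where "rsetup \<Delta> \<Sigma> V" using setup_from_reflexive[OF assms] by blast
  then interpret rsetup \<Delta> \<Sigma> V .
  have simp: "\<exists>S. finite S \<and> independent S \<and> \<sigma> = cone_gen S" if "\<sigma> \<in> \<Sigma>" for \<sigma>
    using assms(2) that unfolding Delta_maximal_def simplicial_fan_def by blast
  show ?thesis
  proof (intro conjI ballI impI)
    fix \<sigma> assume s: "\<sigma> \<in> \<Sigma>" and d: "dim \<sigma> \<le> 3"
    obtain S where S: "finite S" "independent S" "\<sigma> = cone_gen S" using simp[OF s] by blast
    have "card S \<le> 3" using d dim_cone_gen[OF S(1,2)] S(3) by simp
    thus "unimodular_cone \<sigma>" using unimod[OF s S(3,1,2)] by blast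
  next
    fix \<sigma> assume s: "\<sigma> \<in> \<Sigma>" and d: "dim \<sigma> = 4 \<and> \<not> (\<exists>\<tau>\<in>maximal_cones_of_face_fan \<Delta>. \<sigma> \<subseteq> \<tau>)"
    obtain S where S: "finite S" "independent S" "\<sigma> = cone_gen S" using simp[OF s] by blast
    have "card S = 4" using d dim_cone_gen[OF S(1,2)] S(3) by simp
    thus "unimodular_cone \<sigma>" using unimod[OF s S(3,1,2)] d by blast
  qed
qed


end
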